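(* Every pair of elements of $\mathrm{PSp}(1)$ is strongly doubly reversible.
   Context: $\mathrm{Sp}(1)$ is the group of unit quaternions and $\mathrm{PSp}(1)=\mathrm{Sp}(1)/\{\pm 1\}$. A pair $(g_1,g_2)$ in a group $G$ is strongly doubly reversible if there is $g\in G$ with $g^2=1$ such that $g g_1 g^{-1}=g_1^{-1}$ and $g g_2 g^{-1}=g_2^{-1}$. *)

theory Defs
  imports Complex_Main "HOL-Algebra.Coset"
begin

datatype quat = Quat (qre: real) (qi: real) (qj: real) (qk: real)

definition qmul :: "quat \<Rightarrow> quat \<Rightarrow> quat" where
  "qmul p q = Quat
     (qre p * qre q - qi p * qi q - qj p * qj q - qk p * qk q)
     (qre p * qi q + qi p * qre q + qj p * qk q - qk p * qj q)
     (qre p * qj q - qi p * qk q + qj p * qre q + qk p * qi q)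
     (qre p * qk q + qi p * qj q - qj p * qi q + qk p * qre q)"

definition qnorm2 :: "quat \<Rightarrow> real" where
  "qnorm2 q = (qre q)^2 + (qi q)^2 + (qj q)^2 + (qk q)^2"

definition Sp1 :: "quat monoid" where
  "Sp1 = \<lparr>carrier = {q. qnorm2 q = 1}, mult = qmul, one = Quat 1 0 0 0\<rparr>"

definition PSp1 :: "quat set monoid" where
  "PSp1 = Sp1 Mod {Quat 1 0 0 0, Quat (-1) 0 0 0}"

definition strongly_doubly_reversible :: "('a, 'b) monoid_scheme \<Rightarrow> 'a \<Rightarrow> 'a \<Rightarrow> bool" where
  "strongly_doubly_reversible G g1 g2 \<longleftrightarrow>
     (\<exists>g \<in> carrier G. g \<otimes>\<^bsub>G\<^esub> g = \<one>\<^bsub>G\<^esub>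
        \<and> g \<otimes>\<^bsub>G\<^esub> g1 \<otimes>\<^bsub>G\<^esub> inv\<^bsub>G\<^esub> g = inv\<^bsub>G\<^esub> g1
        \<and> g \<otimes>\<^bsub>G\<^esub> g2 \<otimes>\<^bsub>G\<^esub> inv\<^bsub>G\<^esub> g = inv\<^bsub>G\<^esub> g2)"

end

theory Submission imports Defs begin

lemma qmul_assoc: "qmul (qmul x y) z = qmul x (qmul y z)"
  by (simp add: qmul_def algebra_simps)

lemma qnorm2_mul: "qnorm2 (qmul x y) = qnorm2 x * qnorm2 y"
  by (simp add: qmul_def qnorm2_def power2_eq_square algebra_simps)

lemma group_Sp1: "group Sp1"
proof (rule groupI)
  fix x assume x: "x \<in> carrier Sp1"
  show "\<exists>y\<in>carrier Sp1. y \<otimes>\<^bsub>Sp1\<^esub> x = \<one>\<^bsub>Sp1\<^esub>"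
  proof (intro bexI)
    let ?y = "Quat (qre x) (- qi x) (- qj x) (- qk x)"
    show "?y \<otimes>\<^bsub>Sp1\<^esub> x = \<one>\<^bsub>Sp1\<^esub>"
      using x by (simp add: Sp1_def qmul_def qnorm2_def power2_eq_square algebra_simps)
    show "?y \<in> carrier Sp1" using x by (simp add: Sp1_def qnorm2_def)
  qed
qed (auto simp: Sp1_def qnorm2_mul qmul_assoc, auto simp: qnorm2_def qmul_def)

definition HH :: "quat set" where "HH = {Quat 1 0 0 0, Quat (-1) 0 0 0}"

lemma sub_HH: "subgroup HH Sp1"
proof -
  interpret group Sp1 by (rule group_Sp1)
  have m1: "Quat (-1) 0 0 0 \<in> carrier Sp1" by (simp add: Sp1_def qnorm2_def)
  have "inv\<^bsub>Sp1\<^esub> (Quat (-1) 0 0 0) = Quat (-1) 0 0 0"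
    by (rule inv_equality) (use m1 in \<open>auto simp: Sp1_def qmul_def\<close>)
  moreover have "inv\<^bsub>Sp1\<^esub> (Quat 1 0 0 0) = Quat 1 0 0 0"
    using inv_one by (simp add: Sp1_def)
  ultimately show ?thesis
    by (intro subgroupI) (auto simp: HH_def Sp1_def qnorm2_def qmul_def)
qed

lemma normal_HH: "normal HH Sp1"
proof -
  interpret group Sp1 by (rule group_Sp1)
  show ?thesis
  proof (rule normal.intro[OF sub_HH group_Sp1], unfold_locales)
    show "\<forall>x\<in>carrier Sp1. HH #>\<^bsub>Sp1\<^esub> x = x <#\<^bsub>Sp1\<^esub> HH"
      by (auto simp: HH_def r_coset_def l_coset_def Sp1_def qmul_def)
  qed
qed

lemma key1:
  assumes "x^2+y^2+z^2 = 1" "x * qi a + y * qj a + z * qk a = 0" "qnorm2 a = 1"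
  shows "qmul (qmul (qmul (Quat 0 x y z) a) (Quat 0 x y z)) a = Quat (-1) 0 0 0"
  using assms unfolding qmul_def qnorm2_def by simp algebra

lemma key2:
  assumes "x^2+y^2+z^2 = 1"
  shows "qmul (Quat 0 x y z) (Quat 0 x y z) = Quat (-1) 0 0 0"
  using assms unfolding qmul_def by simp algebra

lemma normalize:
  fixes v1 v2 v3 :: real
  assumes "(v1,v2,v3) \<noteq> (0,0,0)" "v1*a1+v2*a2+v3*a3 = 0" "v1*b1+v2*b2+v3*b3 = 0"
  shows "\<exists>x y z. x^2+y^2+z^2 = 1 \<and> x*a1+y*a2+z*a3 = 0 \<and> x*b1+y*b2+z*b3 = 0"
proof -
  define s where "s = v1^2+v2^2+v3^2"
  have "s > 0" using assms(1) unfolding s_def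
    by (metis add_nonneg_nonneg add_pos_nonneg add_nonneg_pos prod.inject zero_less_power2 zero_le_power2 order_le_less)
  define n where "n = sqrt s"
  have n: "n > 0" "n^2 = s" using \<open>s>0\<close> by (auto simp: n_def)
  show ?thesis
  proof (intro exI conjI)
    show "(v1/n)^2+(v2/n)^2+(v3/n)^2 = 1" using n \<open>s>0\<close> by (simp add: power_divide s_def add_divide_distrib[symmetric])
    show "v1/n*a1+v2/n*a2+v3/n*a3 = 0" using assms(2) n
      by (metis add_divide_distrib div_0 times_divide_eq_left)
    show "v1/n*b1+v2/n*b2+v3/n*b3 = 0" using assms(3) n
      by (metis add_divide_distrib div_0 times_divide_eq_left)
  qed
qed

lemma perp_exists:
  fixes a1 a2 a3 b1 b2 b3 :: real
  shows "\<exists>x y z. x^2+y^2+z^2 = 1 \<and> x*a1+y*a2+z*a3 = 0 \<and> x*b1+y*b2+z*b3 = 0"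
proof -
  define c1 where "c1 = a2*b3 - a3*b2"
  define c2 where "c2 = a3*b1 - a1*b3"
  define c3 where "c3 = a1*b2 - a2*b1"
  show ?thesis
  proof (cases "(c1,c2,c3) \<noteq> (0,0,0)")
    case True
    then show ?thesis by (rule normalize) (auto simp: c1_def c2_def c3_def algebra_simps)
  next
    case False
    then have c: "c1 = 0" "c2 = 0" "c3 = 0" by auto
    show ?thesis
    proof (cases "(a1,a2,a3) = (0,0,0)")
      case True
      show ?thesis
      proof (cases "b1 \<noteq> 0")
        case True thus ?thesis using \<open>(a1,a2,a3) = (0,0,0)\<close>
          by (intro normalize[of b3 0 "-b1"]) (auto simp: algebra_simps)
      next
        case False
        thus ?thesis using \<open>(a1,a2,a3) = (0,0,0)\<close>
          by (intro normalize[of 1 0 0]) auto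
      qed
    next
      case nz: False
      have gen: "v1*b1+v2*b2+v3*b3 = 0" if "v1*a1+v2*a2+v3*a3 = 0" for v1 v2 v3
      proof -
        have "a1*(v1*b1+v2*b2+v3*b3) = 0" "a2*(v1*b1+v2*b2+v3*b3) = 0" "a3*(v1*b1+v2*b2+v3*b3) = 0"
          using c that unfolding c1_def c2_def c3_def by algebra+
        thus ?thesis using nz by auto
      qed
      show ?thesis
      proof (cases "a1 \<noteq> 0")
        case True thus ?thesis using gen[of a3 0 "-a1"]
          by (intro normalize[of a3 0 "-a1"]) (auto simp: algebra_simps)
      next
        case False
        thus ?thesis using gen[of 1 0 0]
          by (intro normalize[of 1 0 0]) auto
      qed
    qed
  qed
qed

theorem theorem3p3:
  assumes "g1 \<in> carrier PSp1" and "g2 \<in> carrier PSp1"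
  shows "strongly_doubly_reversible PSp1 g1 g2"
proof -
  interpret N: normal HH Sp1 by (rule normal_HH)
  have P: "PSp1 = Sp1 Mod HH" by (simp add: PSp1_def HH_def)
  interpret Q: group "Sp1 Mod HH" by (rule N.factorgroup_is_group)
  obtain a where a: "a \<in> carrier Sp1" "g1 = HH #>\<^bsub>Sp1\<^esub> a"
    using assms(1) unfolding P carrier_FactGroup by auto
  obtain b where b: "b \<in> carrier Sp1" "g2 = HH #>\<^bsub>Sp1\<^esub> b"
    using assms(2) unfolding P carrier_FactGroup by auto
  obtain x y z where u: "x^2+y^2+z^2 = 1" "x * qi a + y * qj a + z * qk a = 0"
      "x * qi b + y * qj b + z * qk b = 0"
    using perp_exists[of "qi a" "qj a" "qk a" "qi b" "qj b" "qk b"] by blast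
  define u where "u = Quat 0 x y z"
  have uc: "u \<in> carrier Sp1" using u(1) by (simp add: u_def Sp1_def qnorm2_def)
  have m1: "Quat (-1) 0 0 0 \<in> HH" by (simp add: HH_def)
  define g where "g = HH #>\<^bsub>Sp1\<^esub> u"
  have gc: "g \<in> carrier (Sp1 Mod HH)" unfolding g_def carrier_FactGroup using uc by auto
  have g1c: "g1 \<in> carrier (Sp1 Mod HH)" "g2 \<in> carrier (Sp1 Mod HH)" using assms P by auto
  have gg: "g \<otimes>\<^bsub>Sp1 Mod HH\<^esub> g = \<one>\<^bsub>Sp1 Mod HH\<^esub>"
    unfolding g_def using uc key2[OF u(1)] N.rcos_sum[OF uc uc] N.rcos_const[OF group_Sp1 m1]
    by (simp add: u_def Sp1_def)
  have ginv: "inv\<^bsub>Sp1 Mod HH\<^esub> g = g" by (rule Q.inv_equality[OF gg gc gc])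
  have rev: "g \<otimes>\<^bsub>Sp1 Mod HH\<^esub> (HH #>\<^bsub>Sp1\<^esub> c) \<otimes>\<^bsub>Sp1 Mod HH\<^esub> inv\<^bsub>Sp1 Mod HH\<^esub> g
        = inv\<^bsub>Sp1 Mod HH\<^esub> (HH #>\<^bsub>Sp1\<^esub> c)"
    if c: "c \<in> carrier Sp1" "x * qi c + y * qj c + z * qk c = 0" for c
  proof -
    have cc: "HH #>\<^bsub>Sp1\<^esub> c \<in> carrier (Sp1 Mod HH)" unfolding carrier_FactGroup using c by auto
    have qc: "qnorm2 c = 1" using c by (simp add: Sp1_def)
    have uac: "u \<otimes>\<^bsub>Sp1\<^esub> c \<otimes>\<^bsub>Sp1\<^esub> u \<in> carrier Sp1" using uc c by simp
    have "g \<otimes>\<^bsub>Sp1 Mod HH\<^esub> (HH #>\<^bsub>Sp1\<^esub> c) \<otimes>\<^bsub>Sp1 Mod HH\<^esub> g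
          = HH #>\<^bsub>Sp1\<^esub> (u \<otimes>\<^bsub>Sp1\<^esub> c \<otimes>\<^bsub>Sp1\<^esub> u)"
      unfolding g_def using uc c by (simp add: N.rcos_sum)
    moreover have "(HH #>\<^bsub>Sp1\<^esub> (u \<otimes>\<^bsub>Sp1\<^esub> c \<otimes>\<^bsub>Sp1\<^esub> u)) \<otimes>\<^bsub>Sp1 Mod HH\<^esub> (HH #>\<^bsub>Sp1\<^esub> c)
          = \<one>\<^bsub>Sp1 Mod HH\<^esub>"
      using N.rcos_sum[OF uac c(1)] key1[OF u(1) c(2) qc] N.rcos_const[OF group_Sp1 m1]
      by (simp add: u_def Sp1_def)
    ultimately show ?thesis using ginv Q.inv_equality[OF _ cc] Q.m_closed gc cc
      by (metis)
  qed
  show ?thesis unfolding strongly_doubly_reversible_def P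
    using gc gg ginv rev[OF a(1) u(2)] rev[OF b(1) u(3)] a(2) b(2) by blast
qed

end
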